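(* Let $(X,U)$ be a measurable space, $\mu:U\to B_2$ a measure, and $f_n:X\to B_2$ ($n\in\mathbb N$) measurable functions converging decreasingly to $0$, i.e. $\mathrm{supp}\,f_0\supset\mathrm{supp}\,f_1\supset\cdots$ and $\bigcap_n\mathrm{supp}\,f_n=\emptyset$. Then the binary sequence $\int f_n\,d\mu=\mu(\mathrm{supp}\,f_n)$ converges to $0$.
   Context: $B_2=\{0,1\}$. A measurable space $(X,U)$: $U\subset2^X$ non-empty, closed under symmetric difference and intersection. $f:X\to B_2$ is measurable if $\mathrm{supp}\,f=\{x:f(x)=1\}\in U$, and $\int f\,d\mu=\mu(\mathrm{supp}\,f)$. $\mu$ is a measure if for every sequence of pairwise disjoint sets of $U$ whose union is in $U$, only finitely many have $\mu$-value 1 and $\mu$ of the union is their number modulo 2. A binary sequence converges to $0$ if it is eventually equal to $0$. *)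

theory Defs
  imports Main
begin

text \<open>B_2 = {0,1} is modelled by bool (False = 0, True = 1).\<close>

definition bin_measurable_space :: "'a set \<Rightarrow> 'a set set \<Rightarrow> bool" where
  "bin_measurable_space X U \<longleftrightarrow> U \<subseteq> Pow X \<and> U \<noteq> {} \<and>
     (\<forall>A\<in>U. \<forall>B\<in>U. (A - B) \<union> (B - A) \<in> U \<and> A \<inter> B \<in> U)"

definition bin_measure :: "'a set set \<Rightarrow> ('a set \<Rightarrow> bool) \<Rightarrow> bool" where
  "bin_measure U \<mu> \<longleftrightarrow>
     (\<forall>A :: nat \<Rightarrow> 'a set. range A \<subseteq> U \<longrightarrow> (\<forall>i j. i \<noteq> j \<longrightarrow> A i \<inter> A j = {}) \<longrightarrow> (\<Union>n. A n) \<in> U \<longrightarrow>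
        finite {n. \<mu> (A n)} \<and> \<mu> (\<Union>n. A n) = odd (card {n. \<mu> (A n)}))"

definition supp :: "'a set \<Rightarrow> ('a \<Rightarrow> bool) \<Rightarrow> 'a set" where
  "supp X f = {x \<in> X. f x}"

definition bin_measurable_fun :: "'a set \<Rightarrow> 'a set set \<Rightarrow> ('a \<Rightarrow> bool) \<Rightarrow> bool" where
  "bin_measurable_fun X U f \<longleftrightarrow> supp X f \<in> U"

definition bin_integral :: "'a set \<Rightarrow> ('a set \<Rightarrow> bool) \<Rightarrow> ('a \<Rightarrow> bool) \<Rightarrow> bool" where
  "bin_integral X \<mu> f = \<mu> (supp X f)"

text \<open>A binary sequence converges to 0 iff it is eventually 0.\<close>
definition bin_converges_to_zero :: "(nat \<Rightarrow> bool) \<Rightarrow> bool" where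
  "bin_converges_to_zero s \<longleftrightarrow> (\<exists>N. \<forall>n\<ge>N. \<not> s n)"

end

theory Submission
  imports Defs
begin

theorem corollary7p10:
  fixes X :: "'a set" and U :: "'a set set" and \<mu> :: "'a set \<Rightarrow> bool"
    and f :: "nat \<Rightarrow> 'a \<Rightarrow> bool"
  assumes "bin_measurable_space X U"
    and "bin_measure U \<mu>"
    and "\<And>n. bin_measurable_fun X U (f n)"
    and "\<And>n. supp X (f (Suc n)) \<subseteq> supp X (f n)"
    and "(\<Inter>n. supp X (f n)) = {}"
  shows "bin_converges_to_zero (\<lambda>n. bin_integral X \<mu> (f n))"
proof -
  define S where "S n = supp X (f n)" for n
  have SU: "S n \<in> U" for n using assms(3) by (simp add: S_def bin_measurable_fun_def)
  have mono: "S j \<subseteq> S i" if "i \<le> j" for i j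
    using lift_Suc_antimono_le[of S, OF _ that] assms(4) unfolding S_def by blast
  define A where "A n = S n - S (Suc n)" for n
  have AU: "A n \<in> U" for n
  proof -
    have cl: "\<forall>A\<in>U. \<forall>B\<in>U. (A - B) \<union> (B - A) \<in> U \<and> A \<inter> B \<in> U"
      using assms(1) unfolding bin_measurable_space_def by blast
    have "S n \<inter> S (Suc n) \<in> U" using cl SU by blast
    then have "(S n - S n \<inter> S (Suc n)) \<union> (S n \<inter> S (Suc n) - S n) \<in> U"
      using cl SU by blast
    moreover have "(S n - S n \<inter> S (Suc n)) \<union> (S n \<inter> S (Suc n) - S n) = A n"
      unfolding A_def by blast
    ultimately show ?thesis by simp
  qed
  have disj: "A i \<inter> A j = {}" if "i < j" for i j
    using mono[of "Suc i" j] that unfolding A_def by auto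
  have un: "(\<Union>n. A (n + m)) = S m" for m
  proof
    show "(\<Union>n. A (n + m)) \<subseteq> S m"
    proof (rule UN_least)
      fix n
      have "S (n + m) \<subseteq> S m" by (rule mono) simp
      then show "A (n + m) \<subseteq> S m" unfolding A_def by blast
    qed
  next
    show "S m \<subseteq> (\<Union>n. A (n + m))"
    proof
      fix x assume x: "x \<in> S m"
      have "\<exists>k. x \<notin> S (m + k)"
      proof (rule ccontr)
        assume "\<not> ?thesis"
        then have "x \<in> S n" for n using mono[of n "m + n"] by auto
        then show False using assms(5) unfolding S_def by auto
      qed
      define k where "k = (LEAST k. x \<notin> S (m + k))"
      have k1: "x \<notin> S (m + k)" unfolding k_def by (rule LeastI_ex) fact
      have "k \<noteq> 0" using k1 x by (cases k) auto
      then obtain k' where kk: "k = Suc k'" by (cases k) auto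
      have "x \<in> S (m + k')"
      proof (rule ccontr)
        assume "x \<notin> S (m + k')"
        then have "k \<le> k'" unfolding k_def by (rule Least_le)
        then show False using kk by simp
      qed
      then have "x \<in> A (k' + m)" using k1 kk unfolding A_def by (simp add: add.commute)
      then show "x \<in> (\<Union>n. A (n + m))" by blast
    qed
  qed
  have meas: "finite {n. \<mu> (A (n + m))} \<and> \<mu> (\<Union>n. A (n + m)) = odd (card {n. \<mu> (A (n + m))})" for m
  proof -
    have "range (\<lambda>n. A (n + m)) \<subseteq> U" using AU by auto
    moreover have "\<forall>i j. i \<noteq> j \<longrightarrow> A (i + m) \<inter> A (j + m) = {}"
    proof (intro allI impI)
      fix i j :: nat assume "i \<noteq> j"
      then have "i + m < j + m \<or> j + m < i + m" by linarith
      then show "A (i + m) \<inter> A (j + m) = {}" using disj by blast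
    qed
    moreover have "(\<Union>n. A (n + m)) \<in> U" using un SU by simp
    ultimately show ?thesis using assms(2) unfolding bin_measure_def
      by (elim allE[where x="\<lambda>n. A (n + m)"]) blast
  qed
  have "finite {n. \<mu> (A n)}" using meas[of 0] by simp
  then obtain N where N: "\<forall>n\<ge>N. \<not> \<mu> (A n)"
    using finite_nat_set_iff_bounded by (metis mem_Collect_eq not_le)
  show ?thesis unfolding bin_converges_to_zero_def bin_integral_def
  proof (intro exI allI impI)
    fix m assume "N \<le> m"
    then have "{n. \<mu> (A (n + m))} = {}" using N by auto
    then show "\<not> \<mu> (supp X (f m))" using meas[of m] un[of m] unfolding S_def by simp
  qed
qed

end
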